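(* Let $d\ge1$. Let $F:(0,\infty)\to\mathbb R$ be continuous and one-well, i.e. there is $r_0>0$ such that $F$ is strictly decreasing on $(0,r_0)$ and strictly increasing on $(r_0,\infty)$. Let $\rho:(0,\infty)\to[0,\infty)$ be continuous, strictly decreasing, with $\rho(r)=O(r^{-d-\eta})$ as $r\to\infty$ for some $\eta>0$. Then for every $L\in\mathcal L_d(1)$ the function $\lambda\mapsto F(E_\rho[\lambda L])$ has a unique minimizer $\lambda^{F,\rho}_L>0$ on $(0,\infty)$, and $F(E_\rho[\lambda^{F,\rho}_L L])=\min F=F(r_0)$. Furthermore, if $L_d\in\mathcal L_d(1)$ is the unique (up to isometries) minimizer on $\mathcal L_d(1)$ of $L\mapsto E_\rho[\lambda^{F,\rho}_{L_d}L]$, then $L_d$ is the unique (up to isometries) minimizer on $\mathcal L_d(1)$ of $L\mapsto\lambda^{F,\rho}_L$.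
   Context: $\mathcal L_d$ denotes the set of all lattices $L=\bigoplus_{i=1}^d\mathbb Z u_i$ with $\{u_i\}$ a basis of $\mathbb R^d$, and $\mathcal L_d(1)\subset\mathcal L_d$ the lattices with $|\det(u_1,\dots,u_d)|=1$. For a function $f:(0,\infty)\to\mathbb R$ with $|f(r)|=O(r^{-d-\eta})$ as $r\to\infty$ for some $\eta>0$, $E_f[L]:=\sum_{q\in L\setminus\{0\}}f(|q|)$. Uniqueness of minimizers among lattices is understood up to isometries. *)

theory Defs
  imports "HOL-Analysis.Analysis" "HOL-Library.Landau_Symbols"
begin

definition lattice_of :: "real^'n^'n \<Rightarrow> (real^'n) set" where
  "lattice_of A = range (\<lambda>k::'n \<Rightarrow> int. A *v (\<chi> i. of_int (k i)))"

definition lattices :: "(real^'n) set set" where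
  "lattices = {lattice_of A | A. det A \<noteq> 0}"

definition unit_lattices :: "(real^'n) set set" where
  "unit_lattices = {lattice_of A | A. \<bar>det A\<bar> = 1}"

definition lattice_energy :: "(real \<Rightarrow> real) \<Rightarrow> (real^'n) set \<Rightarrow> real" where
  "lattice_energy f L = infsum (\<lambda>q. f (norm q)) (L - {0})"

definition scale_lattice :: "real \<Rightarrow> (real^'n) set \<Rightarrow> (real^'n) set" where
  "scale_lattice c L = (\<lambda>x. c *\<^sub>R x) ` L"

definition isometric_lattices :: "(real^'n) set \<Rightarrow> (real^'n) set \<Rightarrow> bool" where
  "isometric_lattices L L' \<longleftrightarrow>
     (\<exists>f :: real^'n \<Rightarrow> real^'n. (\<forall>x y. dist (f x) (f y) = dist x y) \<and> f ` L = L')"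

definition lambda_opt :: "(real \<Rightarrow> real) \<Rightarrow> (real \<Rightarrow> real) \<Rightarrow> (real^'n) set \<Rightarrow> real" where
  "lambda_opt F \<rho> L = (THE s. s > 0 \<and>
      (\<forall>\<mu>>0. F (lattice_energy \<rho> (scale_lattice s L)) \<le> F (lattice_energy \<rho> (scale_lattice \<mu> L))))"

end

theory Submission
  imports Defs
begin
lemma prod_bound:
  fixes k :: "'n::finite \<Rightarrow> int" and s :: real
  assumes s: "s > 0"
  shows "(1 + (\<Sum>i\<in>UNIV. (real_of_int (k i))^2)) powr (-s/2)
     \<le> (\<Prod>i\<in>UNIV. (1 + (real_of_int (k i))^2) powr (-(s / (2 * real CARD('n)))))"
proof -
  define p where "p = s / (2 * real CARD('n))"
  define T where "T = 1 + (\<Sum>i\<in>UNIV. (real_of_int (k i))^2)"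
  have T1: "T \<ge> 1" unfolding T_def by (simp add: sum_nonneg)
  have fi: "1 + (real_of_int (k i))^2 \<le> T" for i
    unfolding T_def using member_le_sum[of i UNIV "\<lambda>i. (real_of_int (k i))^2"] by simp
  have "(\<Prod>i\<in>UNIV. (1 + (real_of_int (k i))^2) powr (-p)) = (\<Prod>i\<in>UNIV. (1 + (real_of_int (k i))^2)) powr (-p)"
    by (simp add: prod_powr_distrib)
  also have "\<dots> \<ge> (T ^ CARD('n)) powr (-p)"
  proof -
    have "(\<Prod>i\<in>UNIV. (1 + (real_of_int (k i))^2)) \<le> (\<Prod>i\<in>(UNIV::'n set). T)"
      by (intro prod_mono) (use fi in auto)
    moreover have "(\<Prod>i\<in>UNIV. (1 + (real_of_int (k i))^2)) > 0"
      by (intro prod_pos) (auto simp: add_pos_nonneg)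
    ultimately show ?thesis
      using s by (intro powr_mono2') (auto simp: p_def)
  qed
  finally have "(T ^ CARD('n)) powr (-p) \<le> (\<Prod>i\<in>UNIV. (1 + (real_of_int (k i))^2) powr (-p))" .
  moreover have "(T ^ CARD('n)) powr (-p) = T powr (-s/2)"
    using T1 by (simp add: powr_realpow[symmetric] powr_powr p_def)
  ultimately have "T powr (-s/2) \<le> (\<Prod>i\<in>UNIV. (1 + (real_of_int (k i))^2) powr (-p))"
    by linarith
  then show ?thesis unfolding T_def p_def .
qed
lemma nat_part_summable:
  assumes p: "p > 1/2"
  shows "(\<lambda>n::nat. (1 + (real n)^2) powr (-p)) summable_on UNIV"
proof -
  have sp: "summable (\<lambda>n::nat. real n powr (-2*p))"
    using p by (simp only: summable_real_powr_iff)
  have ev: "\<forall>\<^sub>F n in sequentially. norm ((1 + (real n)^2) powr (-p)) \<le> real n powr (-2*p)"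
  proof (rule eventually_sequentiallyI[of 1])
    fix n :: nat assume "n \<ge> 1"
    then have n: "real n > 0" by simp
    have le: "(1 + (real n)^2) powr (-p) \<le> ((real n)^2) powr (-p)"
      by (rule powr_mono2') (use n p in simp_all)
    have "((real n)^2) powr (-p) = (real n powr 2) powr (-p)"
      using n by (subst powr_numeral) auto
    also have "\<dots> = real n powr (-2*p)"
      by (simp only: powr_powr) simp
    finally have "(1 + (real n)^2) powr (-p) \<le> real n powr (-2*p)" using le by linarith
    then show "norm ((1 + (real n)^2) powr (-p)) \<le> real n powr (-2*p)" by simp
  qed
  have "summable (\<lambda>n::nat. (1 + (real n)^2) powr (-p))"
    by (rule summable_comparison_test_ev[OF ev sp])
  then show ?thesis
    by (subst summable_on_UNIV_nonneg_real_iff) auto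
qed
lemma int_summable:
  assumes p: "p > 1/2"
  shows "(\<lambda>m::int. (1 + (real_of_int m)^2) powr (-p)) summable_on UNIV"
proof -
  let ?f = "\<lambda>m::int. (1 + (real_of_int m)^2) powr (-p)"
  have U: "(UNIV::int set) = int ` UNIV \<union> (\<lambda>n. - int n) ` UNIV"
    by (auto intro: int_cases)
  have 1: "?f summable_on int ` UNIV"
    by (subst summable_on_reindex) (use nat_part_summable[OF p] in \<open>auto simp: o_def inj_on_def\<close>)
  have 2: "?f summable_on (\<lambda>n. - int n) ` UNIV"
    by (subst summable_on_reindex) (use nat_part_summable[OF p] in \<open>auto simp: o_def inj_on_def\<close>)
  show ?thesis
    by (subst U, rule summable_on_union[OF 1 2])
qed


lemma prod_abs_summable:
  fixes f :: "'n::finite \<Rightarrow> int \<Rightarrow> real"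
  assumes fs: "\<And>i. Infinite_Set_Sum.abs_summable_on (f i) UNIV"
  shows "(\<lambda>g. norm (\<Prod>i\<in>UNIV. f i (g i))) summable_on UNIV"
proof -
  have "Infinite_Set_Sum.abs_summable_on (\<lambda>g. \<Prod>i\<in>UNIV. f i (g i)) (PiE UNIV (\<lambda>_. UNIV))"
  apply (rule abs_summable_on_prod_PiE[where f=f and A=UNIV and B="\<lambda>_. UNIV"])
  apply simp
  apply (rule countableI'[where f="id::int\<Rightarrow>int", OF inj_on_id])
  apply (rule fs)
  done
  then have "Infinite_Set_Sum.abs_summable_on (\<lambda>g. \<Prod>i\<in>UNIV. f i (g i)) UNIV"
    by (simp only: PiE_UNIV)
  then show "(\<lambda>g. norm (\<Prod>i\<in>UNIV. f i (g i))) summable_on UNIV"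
    by (rule abs_summable_equivalent[THEN iffD2])
qed

lemma Zfun_summable:
  assumes s: "s > real CARD('n)"
  shows "(\<lambda>k::'n::finite \<Rightarrow> int. (1 + (\<Sum>i\<in>UNIV. (real_of_int (k i))^2)) powr (-s/2)) summable_on UNIV"
proof -
  define p where "p = s / (2 * real CARD('n))"
  have c0: "real CARD('n) > 0" by simp
  have s0: "s > 0" using s c0 by linarith
  have p: "p > 1/2" using s c0 unfolding p_def by (simp add: pos_less_divide_eq)
  define f where "f = (\<lambda>(i::'n) (m::int). (1 + (real_of_int m)^2) powr (-p))"
  have fs: "Infinite_Set_Sum.abs_summable_on (f i) UNIV" for i
  proof -
    have "(\<lambda>m. norm (f i m)) summable_on UNIV"
      using int_summable[OF p] by (simp add: f_def)
    then show "Infinite_Set_Sum.abs_summable_on (f i) UNIV"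
      by (rule abs_summable_equivalent[THEN iffD1])
  qed
  have "(\<lambda>g. norm (\<Prod>i\<in>UNIV. f i (g i))) summable_on UNIV"
    by (rule prod_abs_summable[OF fs])
  moreover have "(\<lambda>g. norm (\<Prod>i\<in>UNIV. f i (g i))) = (\<lambda>g. \<Prod>i\<in>UNIV. f i (g i))"
    by (intro ext, simp only: real_norm_def, rule abs_of_nonneg, rule prod_nonneg, simp add: f_def)
  ultimately have sum2: "(\<lambda>g. \<Prod>i\<in>UNIV. f i (g i)) summable_on UNIV"
    by simp
  show ?thesis
  proof (rule summable_on_comparison_test[OF sum2])
    fix k :: "'n \<Rightarrow> int"
    show "(1 + (\<Sum>i\<in>UNIV. (real_of_int (k i))^2)) powr (-s/2) \<le> (\<Prod>i\<in>UNIV. f i (k i))"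
      using prod_bound[OF s0, of k] unfolding f_def p_def by (simp only:)
    show "0 \<le> (1 + (\<Sum>i\<in>UNIV. (real_of_int (k i))^2)) powr (-s/2)" by (rule powr_ge_zero)
  qed
qed



locale lat =
  fixes \<rho> :: "real \<Rightarrow> real" and S :: "'a::real_normed_vector set"
    and \<delta> s C R :: real
  assumes rho_cont: "continuous_on {0<..} \<rho>"
    and rho_nonneg: "\<And>r. r > 0 \<Longrightarrow> \<rho> r \<ge> 0"
    and rho_dec: "\<And>x y. 0 < x \<Longrightarrow> x < y \<Longrightarrow> \<rho> y < \<rho> x"
    and delta_pos: "\<delta> > 0"
    and S_norm: "\<And>q. q \<in> S \<Longrightarrow> \<delta> \<le> norm q"
    and s_pos: "s > 0"
    and S_sum: "(\<lambda>q. norm q powr (-s)) summable_on S"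
    and S_inf: "infinite S"
    and R_pos: "R > 0"
    and C_nonneg: "C \<ge> 0"
    and decay: "\<And>r. r \<ge> R \<Longrightarrow> \<rho> r \<le> C * r powr (-s)"

definition (in lat) E :: "real \<Rightarrow> real" where
  "E l = infsum (\<lambda>q. \<rho> (l * norm q)) S"

lemma (in lat) rho_mono: "0 < x \<Longrightarrow> x \<le> y \<Longrightarrow> \<rho> y \<le> \<rho> x"
  using rho_dec[of x y] by (cases "x = y") auto

lemma (in lat) q_pos: "q \<in> S \<Longrightarrow> norm q > 0"
  using S_norm[of q] delta_pos by linarith

lemma (in lat) summ: 
  assumes l: "l > 0"
  shows "(\<lambda>q. \<rho> (l * norm q)) summable_on S"
proof -
  define K where "K = C * l powr (-s) + \<rho> (l * \<delta>) * (R / l) powr s"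
  have ld: "l * \<delta> > 0" using l delta_pos by simp
  have K2: "0 \<le> \<rho> (l * \<delta>) * (R / l) powr s"
    using rho_nonneg[OF ld] by simp
  have K1: "0 \<le> C * l powr (-s)" using C_nonneg by simp
  have pt: "\<rho> (l * norm q) \<le> K * norm q powr (-s)" if q: "q \<in> S" for q
  proof -
    have n: "norm q > 0" using q_pos[OF q] .
    have nd: "\<delta> \<le> norm q" using S_norm[OF q] .
    show ?thesis
    proof (cases "l * norm q \<ge> R")
      case True
      have "\<rho> (l * norm q) \<le> C * (l * norm q) powr (-s)" by (rule decay[OF True])
      also have "\<dots> = (C * l powr (-s)) * norm q powr (-s)"
        using l n by (simp add: powr_mult)
      also have "\<dots> \<le> K * norm q powr (-s)"
        unfolding K_def by (intro mult_right_mono) (use K2 in auto)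
      finally show ?thesis .
    next
      case False
      then have nR: "norm q \<le> R / l" using l by (simp add: field_simps)
      have Rl: "R / l > 0" using R_pos l by simp
      have "\<rho> (l * norm q) \<le> \<rho> (l * \<delta>)"
        by (rule rho_mono[OF ld]) (use l nd in simp)
      also have "\<dots> = \<rho> (l * \<delta>) * (R / l) powr s * (R / l) powr (-s)"
        using Rl R_pos l by (simp add: powr_minus field_simps)
      also have "\<dots> \<le> \<rho> (l * \<delta>) * (R / l) powr s * norm q powr (-s)"
        by (intro mult_left_mono powr_mono2') (use n nR K2 s_pos in auto)
      also have "\<dots> \<le> K * norm q powr (-s)"
        unfolding K_def by (intro mult_right_mono) (use K1 in auto)
      finally show ?thesis .
    qed
  qed
  show ?thesis
  proof (rule summable_on_comparison_test[OF summable_on_cmult_right[OF S_sum, of K]])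
    fix q assume q: "q \<in> S"
    show "\<rho> (l * norm q) \<le> K * norm q powr (-s)" by (rule pt[OF q])
    show "0 \<le> \<rho> (l * norm q)" by (rule rho_nonneg) (use l q_pos[OF q] in simp)
  qed
qed

lemma (in lat) S_ne: "\<exists>q. q \<in> S"
  using S_inf by (metis ex_in_conv finite.emptyI)

lemma (in lat) E_strict:
  assumes "0 < l" "l < m"
  shows "E m < E l"
proof -
  obtain q0 where q0: "q0 \<in> S" using S_ne by blast
  show ?thesis unfolding E_def
  proof (rule has_sum_strict_mono)
    show "((\<lambda>q. \<rho> (m * norm q)) has_sum infsum (\<lambda>q. \<rho> (m * norm q)) S) S"
      using summ[of m] assms by (intro has_sum_infsum) simp
    show "((\<lambda>q. \<rho> (l * norm q)) has_sum infsum (\<lambda>q. \<rho> (l * norm q)) S) S"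
      using summ[of l] assms by (intro has_sum_infsum) simp
    show "\<rho> (m * norm q) \<le> \<rho> (l * norm q)" if "q \<in> S" for q
      using q_pos[OF that] assms by (intro rho_mono) auto
    show "q0 \<in> S" by (rule q0)
    show "\<rho> (m * norm q0) < \<rho> (l * norm q0)"
      using q_pos[OF q0] assms by (intro rho_dec) auto
  qed
qed

lemma (in lat) E_pos:
  assumes "0 < l"
  shows "E l > 0"
proof -
  obtain q0 where q0: "q0 \<in> S" using S_ne by blast
  show ?thesis unfolding E_def
  proof (rule has_sum_strict_mono)
    show "((\<lambda>q. 0) has_sum 0) S" by (rule has_sum_0) simp
    show "((\<lambda>q. \<rho> (l * norm q)) has_sum infsum (\<lambda>q. \<rho> (l * norm q)) S) S"
      using summ[of l] assms by (intro has_sum_infsum) simp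
    show "0 \<le> \<rho> (l * norm q)" if "q \<in> S" for q
      using q_pos[OF that] assms by (intro rho_nonneg) auto
    show "q0 \<in> S" by (rule q0)
    show "0 < \<rho> (l * norm q0)"
    proof -
      have p: "l * norm q0 > 0" using q_pos[OF q0] assms by simp
      have "\<rho> (l * norm q0 + 1) < \<rho> (l * norm q0)" by (rule rho_dec) (use p in auto)
      moreover have "\<rho> (l * norm q0 + 1) \<ge> 0" by (rule rho_nonneg) (use p in auto)
      ultimately show ?thesis by linarith
    qed
  qed
qed

lemma (in lat) E_cont_at:
  assumes x: "x > 0"
  shows "isCont E x"
proof -
  define Y where "Y = {x/2..2*x}"
  have ul: "uniform_limit Y (\<lambda>X y. \<Sum>q\<in>X. \<rho> (y * norm q)) (\<lambda>y. \<Sum>\<^sub>\<infinity>q\<in>S. \<rho> (y * norm q)) (finite_subsets_at_top S)"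
  proof (rule Weierstrass_m_test_general[where M="\<lambda>q. \<rho> (x/2 * norm q)"])
    show "norm (\<rho> (y * norm q)) \<le> \<rho> (x/2 * norm q)" if "q \<in> S" "y \<in> Y" for q y
    proof -
      have n: "norm q > 0" using q_pos[OF that(1)] .
      have y: "x/2 \<le> y" using that(2) by (simp add: Y_def)
      have p: "x/2 * norm q > 0" using n x by simp
      have "0 \<le> \<rho> (y * norm q)" by (rule rho_nonneg) (use p y n in \<open>smt (verit) mult_right_mono\<close>)
      moreover have "\<rho> (y * norm q) \<le> \<rho> (x/2 * norm q)"
        by (rule rho_mono[OF p]) (use y n in \<open>simp add: mult_right_mono\<close>)
      ultimately show ?thesis by simp
    qed
    show "(\<lambda>q. \<rho> (x/2 * norm q)) summable_on S" by (rule summ) (use x in simp)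
  qed
  have cont: "\<forall>\<^sub>F X in finite_subsets_at_top S. continuous_on Y (\<lambda>y. \<Sum>q\<in>X. \<rho> (y * norm q))"
  proof (rule eventually_finite_subsets_at_top_weakI)
    fix X assume X: "finite X" "X \<subseteq> S"
    show "continuous_on Y (\<lambda>y. \<Sum>q\<in>X. \<rho> (y * norm q))"
    proof (rule continuous_on_sum)
      fix q assume "q \<in> X"
      then have n: "norm q > 0" using X q_pos by blast
      show "continuous_on Y (\<lambda>y. \<rho> (y * norm q))"
      proof (rule continuous_on_compose2[OF rho_cont])
        show "continuous_on Y (\<lambda>y. y * norm q)" by (intro continuous_intros)
        show "(\<lambda>y. y * norm q) ` Y \<subseteq> {0<..}"
          using n x by (auto simp: Y_def)
      qed
    qed
  qed
  have "continuous_on Y (\<lambda>y. \<Sum>\<^sub>\<infinity>q\<in>S. \<rho> (y * norm q))"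
    by (rule uniform_limit_theorem[OF cont ul]) simp
  then have "continuous_on Y E" by (simp add: E_def[abs_def])
  moreover have "x \<in> interior Y" using x by (simp add: Y_def)
  ultimately show ?thesis by (rule continuous_on_interior)
qed

lemma (in lat) E_cont: "continuous_on {0<..} E"
  by (rule continuous_at_imp_continuous_on) (auto intro: E_cont_at)


lemma (in lat) E_small:
  assumes t: "t > 0"
  shows "\<exists>b>0. E b < t"
proof -
  define Z where "Z = infsum (\<lambda>q. norm q powr (-s)) S"
  have bound: "E l \<le> C * l powr (-s) * Z" if l: "l \<ge> R / \<delta>" "l > 0" for l
  proof -
    have "E l \<le> infsum (\<lambda>q. (C * l powr (-s)) * norm q powr (-s)) S"
      unfolding E_def
    proof (rule infsum_mono)
      show "(\<lambda>q. \<rho> (l * norm q)) summable_on S" by (rule summ[OF l(2)])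
      show "(\<lambda>q. (C * l powr (-s)) * norm q powr (-s)) summable_on S"
        by (rule summable_on_cmult_right[OF S_sum])
      fix q assume q: "q \<in> S"
      have n: "norm q > 0" using q_pos[OF q] .
      have "R \<le> l * \<delta>" using l delta_pos by (simp add: field_simps)
      also have "\<dots> \<le> l * norm q" using S_norm[OF q] l by simp
      finally have "\<rho> (l * norm q) \<le> C * (l * norm q) powr (-s)" by (rule decay)
      also have "\<dots> = (C * l powr (-s)) * norm q powr (-s)"
        using l n by (simp add: powr_mult)
      finally show "\<rho> (l * norm q) \<le> (C * l powr (-s)) * norm q powr (-s)" .
    qed
    also have "\<dots> = C * l powr (-s) * Z"
      unfolding Z_def by (rule infsum_cmult_right') 
    finally show ?thesis .
  qed
  have lim: "((\<lambda>l. C * l powr (-s) * Z) \<longlongrightarrow> C * 0 * Z) at_top"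
    by (intro tendsto_intros tendsto_neg_powr filterlim_ident) (use s_pos in simp)
  then have "\<forall>\<^sub>F l in at_top. C * l powr (-s) * Z < t"
    using t by (intro order_tendstoD(2)[OF lim]) simp
  then obtain N where N: "\<And>l. l \<ge> N \<Longrightarrow> C * l powr (-s) * Z < t"
    by (auto simp: eventually_at_top_linorder)
  define b where "b = max N (max 1 (R / \<delta>))"
  have b: "b > 0" "b \<ge> R / \<delta>" "b \<ge> N" unfolding b_def by auto
  show ?thesis
    using bound[OF b(2) b(1)] N[OF b(3)] b(1) by force
qed

lemma (in lat) E_large:
  "\<exists>a>0. E a > t"
proof -
  have r1: "\<rho> 1 > 0"
  proof -
    have "\<rho> 2 < \<rho> 1" by (rule rho_dec) auto
    moreover have "\<rho> 2 \<ge> 0" by (rule rho_nonneg) auto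
    ultimately show ?thesis by linarith
  qed
  define N where "N = nat (ceiling (\<bar>t\<bar> / \<rho> 1)) + 1"
  obtain T where T: "finite T" "card T = N" "T \<subseteq> S"
    using infinite_arbitrarily_large[OF S_inf] by blast
  have Tne: "T \<noteq> {}" using T(2) N_def by auto
  define M where "M = Max (norm ` T)"
  have Mge: "norm q \<le> M" if "q \<in> T" for q
    unfolding M_def using T(1) that by (intro Max_ge) auto
  obtain q1 where q1: "q1 \<in> T" using Tne by blast
  have M: "M > 0" using Mge[OF q1] q_pos[of q1] q1 T(3) by (meson less_le_trans subsetD)
  define a where "a = 1 / M"
  have a: "a > 0" using M by (simp add: a_def)
  have pt: "\<rho> 1 \<le> \<rho> (a * norm q)" if q: "q \<in> T" for q
  proof (rule rho_mono)
    show "0 < a * norm q" using a q_pos[of q] q T(3) by auto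
    show "a * norm q \<le> 1" using Mge[OF q] M by (simp add: a_def field_simps)
  qed
  have "real N * \<rho> 1 = (\<Sum>q\<in>T. \<rho> 1)" using T(2) by simp
  also have "\<dots> \<le> (\<Sum>q\<in>T. \<rho> (a * norm q))" by (intro sum_mono pt)
  also have "\<dots> = infsum (\<lambda>q. \<rho> (a * norm q)) T" using T(1) by simp
  also have "\<dots> \<le> E a" unfolding E_def
  proof (rule infsum_mono2)
    show "(\<lambda>q. \<rho> (a * norm q)) summable_on T" using T(1) by simp
    show "(\<lambda>q. \<rho> (a * norm q)) summable_on S" by (rule summ[OF a])
    show "T \<subseteq> S" by (rule T(3))
    fix q assume "q \<in> S - T"
    then show "0 \<le> \<rho> (a * norm q)" using a q_pos[of q] by (intro rho_nonneg) auto
  qed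
  finally have 1: "real N * \<rho> 1 \<le> E a" .
  have "\<bar>t\<bar> / \<rho> 1 < real N" unfolding N_def by linarith
  then have "\<bar>t\<bar> < real N * \<rho> 1" using r1 by (simp add: field_simps)
  then show ?thesis using 1 a by (intro exI[of _ a]) auto
qed

lemma (in lat) E_root:
  assumes t: "t > 0"
  shows "\<exists>!l. l > 0 \<and> E l = t"
proof -
  obtain a where a: "a > 0" "E a > t" using E_large by blast
  obtain b where b: "b > 0" "E b < t" using E_small[OF t] by blast
  have ab: "a \<le> b"
  proof (rule ccontr)
    assume "\<not> a \<le> b"
    then have "E a < E b" using E_strict[OF b(1)] by simp
    then show False using a b by linarith
  qed
  have "continuous_on {a..b} E"
    by (rule continuous_on_subset[OF E_cont]) (use a in auto)
  then obtain x where x: "x \<ge> a" "x \<le> b" "E x = t"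
    using IVT2'[of E b t a] a b ab by auto
  show ?thesis
  proof (rule ex1I[of _ x])
    show "x > 0 \<and> E x = t" using x a by simp
    fix y assume y: "y > 0 \<and> E y = t"
    show "y = x"
    proof (rule ccontr)
      assume "y \<noteq> x"
      then consider "y < x" | "x < y" by linarith
      then show False
      proof cases
        case 1 then show False using E_strict[of y x] y x by simp
      next
        case 2 then show False using E_strict[of x y] y x a by simp
      qed
    qed
  qed
qed


definition vecZ :: "('n::finite \<Rightarrow> int) \<Rightarrow> real^'n" where
  "vecZ k = (\<chi> i. real_of_int (k i))"

lemma vecZ_inj: "inj vecZ"
  by (auto simp: inj_def vecZ_def vec_eq_iff fun_eq_iff)

lemma vecZ_zero: "vecZ k = 0 \<longleftrightarrow> k = (\<lambda>_. 0)"
  by (auto simp: vecZ_def vec_eq_iff fun_eq_iff)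

lemma norm_vecZ_sq: "(norm (vecZ k))^2 = (\<Sum>i\<in>UNIV. (real_of_int (k i))^2)"
  by (subst power2_norm_eq_inner) (simp add: inner_vec_def vecZ_def power2_eq_square)

lemma norm_vecZ_ge1:
  assumes "k \<noteq> (\<lambda>_. 0)"
  shows "norm (vecZ k) \<ge> 1"
proof -
  obtain i where i: "k i \<noteq> 0" using assms by (auto simp: fun_eq_iff)
  then have "1 \<le> \<bar>real_of_int (k i)\<bar>" by linarith
  also have "\<dots> = \<bar>vecZ k $ i\<bar>" by (simp add: vecZ_def)
  also have "\<dots> \<le> norm (vecZ k)" by (rule component_le_norm_cart)
  finally show ?thesis .
qed

lemma pow_aux:
  fixes v s :: real
  assumes v: "v \<ge> 1" and s: "s > 0"
  shows "v powr (-s) \<le> 2 powr (s/2) * (1 + v^2) powr (-s/2)"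
proof -
  have v0: "v > 0" using v by linarith
  have "(2 * v^2) powr (-s/2) \<le> (1 + v^2) powr (-s/2)"
  proof (rule powr_mono2')
    show "- s / 2 \<le> 0" using s by simp
    show "0 < 1 + v^2" by (simp add: add_pos_nonneg)
    have "1 \<le> v^2" using v by (simp add: one_le_power)
    then show "1 + v^2 \<le> 2 * v^2" by simp
  qed
  moreover have "(2 * v^2) powr (-s/2) = 2 powr (-s/2) * v powr (-s)"
  proof -
    have "(2 * v^2) powr (-s/2) = 2 powr (-s/2) * (v^2) powr (-s/2)"
      by (simp add: powr_mult)
    also have "(v^2) powr (-s/2) = (v powr 2) powr (-s/2)"
      using v0 by simp
    also have "\<dots> = v powr (-s)"
      by (simp add: powr_powr)
    finally show ?thesis .
  qed
  moreover have "2 powr (s/2) * 2 powr (-s/2) = (1::real)"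
    by (simp add: powr_add[symmetric])
  ultimately have "2 powr (s/2) * (2 powr (-s/2) * v powr (-s)) \<le> 2 powr (s/2) * (1 + v^2) powr (-s/2)"
    by (metis mult_left_mono powr_ge_zero)
  also have "2 powr (s/2) * (2 powr (-s/2) * v powr (-s)) = v powr (-s)"
    using \<open>2 powr (s/2) * 2 powr (-s/2) = (1::real)\<close> by (simp add: mult.assoc[symmetric])
  finally show ?thesis .
qed

lemma lattice_props:
  fixes A :: "real^'n^'n" and s :: real
  assumes A: "det A \<noteq> 0" and s: "s > real CARD('n)"
  shows "\<exists>\<delta>>0. (\<forall>q\<in>lattice_of A - {0}. \<delta> \<le> norm q)
            \<and> (\<lambda>q. norm q powr (-s)) summable_on (lattice_of A - {0})
            \<and> infinite (lattice_of A - {0})"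
proof -
  define f where "f = (\<lambda>k. A *v vecZ k)"
  have injA: "inj (\<lambda>x. A *v x)"
    using A det_nz_iff_inj[of "\<lambda>x. A *v x"] by simp
  have injf: "inj f" unfolding f_def using inj_compose[OF injA vecZ_inj] by (simp add: o_def)
  have f0: "f k = 0 \<longleftrightarrow> k = (\<lambda>_. 0)" for k
  proof -
    have "f k = 0 \<longleftrightarrow> A *v vecZ k = A *v 0" by (simp add: f_def)
    also have "\<dots> \<longleftrightarrow> vecZ k = 0" using injA by (auto simp: inj_def)
    finally show ?thesis by (simp add: vecZ_zero)
  qed
  have Seq: "lattice_of A - {0} = f ` (UNIV - {\<lambda>_. 0})"
    unfolding lattice_of_def f_def vecZ_def[symmetric] using f0 by (auto simp: f_def)
  obtain B where B: "B > 0" "\<And>x. B * norm x \<le> norm (A *v x)"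
    using linear_inj_bounded_below_pos[OF matrix_vector_mul_linear injA] by blast
  have s0: "s > 0" using s by (smt (verit) of_nat_0_le_iff)
  have fnorm: "B \<le> norm (f k)" if "k \<noteq> (\<lambda>_. 0)" for k
  proof -
    have "B * 1 \<le> B * norm (vecZ k)" using norm_vecZ_ge1[OF that] B by simp
    also have "\<dots> \<le> norm (f k)" unfolding f_def by (rule B(2))
    finally show ?thesis by simp
  qed
  define Cst where "Cst = B powr (-s) * 2 powr (s/2)"
  have sumZ: "(\<lambda>k::'n \<Rightarrow> int. Cst * (1 + (\<Sum>i\<in>UNIV. (real_of_int (k i))^2)) powr (-s/2)) summable_on (UNIV - {\<lambda>_. 0})"
    by (rule summable_on_subset_banach[OF summable_on_cmult_right[OF Zfun_summable[OF s]]]) simp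
  have pt: "norm (f k) powr (-s) \<le> Cst * (1 + (\<Sum>i\<in>UNIV. (real_of_int (k i))^2)) powr (-s/2)"
    if k: "k \<noteq> (\<lambda>_. 0)" for k
  proof -
    define v where "v = norm (vecZ k)"
    have v: "v \<ge> 1" using norm_vecZ_ge1[OF k] by (simp add: v_def)
    have "B * v \<le> norm (f k)" unfolding f_def v_def by (rule B(2))
    moreover have "B * v > 0" using B v by simp
    ultimately have "norm (f k) powr (-s) \<le> (B * v) powr (-s)"
      using s0 by (intro powr_mono2') auto
    also have "\<dots> = B powr (-s) * v powr (-s)"
      using B v by (simp add: powr_mult)
    also have "\<dots> \<le> B powr (-s) * (2 powr (s/2) * (1 + v^2) powr (-s/2))"
      by (intro mult_left_mono pow_aux[OF v s0]) simp
    also have "\<dots> = Cst * (1 + (\<Sum>i\<in>UNIV. (real_of_int (k i))^2)) powr (-s/2)"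
      unfolding Cst_def v_def norm_vecZ_sq by (simp add: mult.assoc)
    finally show ?thesis .
  qed
  have summ: "(\<lambda>q. norm q powr (-s)) summable_on (lattice_of A - {0})"
    unfolding Seq
  proof (subst summable_on_reindex)
    show "inj_on f (UNIV - {\<lambda>_. 0})" using injf by (simp add: inj_on_def inj_def)
    show "((\<lambda>q. norm q powr (-s)) \<circ> f) summable_on (UNIV - {\<lambda>_. 0})"
    proof (rule summable_on_comparison_test[OF sumZ])
      fix k :: "'n \<Rightarrow> int" assume "k \<in> UNIV - {\<lambda>_. 0}"
      then show "((\<lambda>q. norm q powr (-s)) \<circ> f) k \<le> Cst * (1 + (\<Sum>i\<in>UNIV. (real_of_int (k i))^2)) powr (-s/2)"
        using pt by simp
      show "0 \<le> ((\<lambda>q. norm q powr (-s)) \<circ> f) k" by simp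
    qed
  qed
  have infZ: "infinite (UNIV - {(\<lambda>_. 0)::'n \<Rightarrow> int})"
  proof -
    have "inj (\<lambda>m::int. (\<lambda>_::'n. m))" by (auto simp: inj_def fun_eq_iff)
    then have "infinite (UNIV :: ('n \<Rightarrow> int) set)"
      using infinite_UNIV_int finite_imageD[of "\<lambda>m::int. (\<lambda>_::'n. m)" UNIV] 
      by (metis finite_subset subset_UNIV)
    then show ?thesis by simp
  qed
  have inf: "infinite (lattice_of A - {0})"
    unfolding Seq using infZ finite_imageD[of f "UNIV - {\<lambda>_. 0}"] injf
    by (metis inj_on_subset subset_UNIV)
  show ?thesis
    using B(1) fnorm summ inf Seq by (intro exI[of _ B]) auto
qed


lemma energy_scale:
  fixes L :: "(real^'n) set"
  assumes l: "l > 0"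
  shows "lattice_energy \<rho> (scale_lattice l L) = infsum (\<lambda>q. \<rho> (l * norm q)) (L - {0})"
proof -
  have eq: "scale_lattice l L - {0} = (\<lambda>x. l *\<^sub>R x) ` (L - {0})"
    unfolding scale_lattice_def using l by auto
  have inj: "inj_on (\<lambda>x. l *\<^sub>R x) (L - {0})"
    using l by (auto simp: inj_on_def)
  have "lattice_energy \<rho> (scale_lattice l L) = infsum ((\<lambda>q. \<rho> (norm q)) \<circ> (\<lambda>x. l *\<^sub>R x)) (L - {0})"
    unfolding lattice_energy_def eq by (rule infsum_reindex[OF inj])
  also have "((\<lambda>q. \<rho> (norm q)) \<circ> (\<lambda>x. l *\<^sub>R x)) = (\<lambda>q. \<rho> (l * norm q))"
    using l by (auto simp: o_def fun_eq_iff)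
  finally show ?thesis .
qed

lemma lattice_key:
  fixes \<rho> :: "real \<Rightarrow> real" and L :: "(real^'n) set"
  assumes rho_cont: "continuous_on {0<..} \<rho>"
    and rho_nonneg: "\<And>r. r > 0 \<Longrightarrow> \<rho> r \<ge> 0"
    and rho_dec: "\<And>x y. 0 < x \<Longrightarrow> x < y \<Longrightarrow> \<rho> y < \<rho> x"
    and rho_decay: "\<exists>\<eta>>0. \<rho> \<in> O[at_top](\<lambda>r. r powr (- real CARD('n) - \<eta>))"
    and L: "L \<in> unit_lattices"
  shows "(\<forall>l m. 0 < l \<longrightarrow> l < m \<longrightarrow> lattice_energy \<rho> (scale_lattice m L) < lattice_energy \<rho> (scale_lattice l L))
       \<and> (\<forall>l>0. lattice_energy \<rho> (scale_lattice l L) > 0)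
       \<and> (\<forall>t>0. \<exists>!l. l > 0 \<and> lattice_energy \<rho> (scale_lattice l L) = t)"
proof -
  obtain A :: "real^'n^'n" where A: "L = lattice_of A" "\<bar>det A\<bar> = 1"
    using L unfolding unit_lattices_def by blast
  have detA: "det A \<noteq> 0" using A(2) by auto
  obtain \<eta> where eta: "\<eta> > 0" "\<rho> \<in> O[at_top](\<lambda>r. r powr (- real CARD('n) - \<eta>))"
    using rho_decay by blast
  define s where "s = real CARD('n) + \<eta>"
  have s: "s > real CARD('n)" using eta by (simp add: s_def)
  have s0: "s > 0" using s by (smt (verit) of_nat_0_le_iff)
  obtain c where c: "c > 0" "eventually (\<lambda>r. norm (\<rho> r) \<le> c * norm (r powr (- real CARD('n) - \<eta>))) at_top"
    using eta(2) by (elim landau_o.bigE) blast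
  obtain N where N: "\<And>r. r \<ge> N \<Longrightarrow> norm (\<rho> r) \<le> c * norm (r powr (- real CARD('n) - \<eta>))"
    using c(2) by (auto simp: eventually_at_top_linorder)
  define R where "R = max N 1"
  have decay: "\<rho> r \<le> c * r powr (-s)" if r: "r \<ge> R" for r
  proof -
    have "\<rho> r \<le> norm (\<rho> r)" by simp
    also have "\<dots> \<le> c * norm (r powr (- real CARD('n) - \<eta>))" by (rule N) (use r in \<open>simp add: R_def\<close>)
    also have "\<dots> = c * r powr (-s)" by (simp add: s_def)
    finally show ?thesis .
  qed
  obtain \<delta> where \<delta>: "\<delta> > 0" "\<forall>q\<in>lattice_of A - {0}. \<delta> \<le> norm q"
      "(\<lambda>q. norm q powr (-s)) summable_on (lattice_of A - {0})" "infinite (lattice_of A - {0})"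
    using lattice_props[OF detA s] by blast
  interpret lat \<rho> "L - {0}" \<delta> s c R
  proof
    show "continuous_on {0<..} \<rho>" by (rule rho_cont)
    show "\<And>r. r > 0 \<Longrightarrow> \<rho> r \<ge> 0" by (rule rho_nonneg)
    show "\<And>x y. 0 < x \<Longrightarrow> x < y \<Longrightarrow> \<rho> y < \<rho> x" by (rule rho_dec)
    show "\<delta> > 0" by (rule \<delta>(1))
    show "\<And>q. q \<in> L - {0} \<Longrightarrow> \<delta> \<le> norm q" using \<delta>(2) A(1) by blast
    show "s > 0" by (rule s0)
    show "(\<lambda>q. norm q powr (-s)) summable_on (L - {0})" using \<delta>(3) A(1) by simp
    show "infinite (L - {0})" using \<delta>(4) A(1) by simp
    show "R > 0" by (simp add: R_def)
    show "c \<ge> 0" using c(1) by simp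
    show "\<And>r. r \<ge> R \<Longrightarrow> \<rho> r \<le> c * r powr (-s)" by (rule decay)
  qed
  have Eeq: "lattice_energy \<rho> (scale_lattice l L) = E l" if "l > 0" for l
    using energy_scale[OF that, of \<rho> L] by (simp add: E_def)
  show ?thesis
  proof (intro conjI allI impI)
    fix l m :: real assume "0 < l" "l < m"
    then show "lattice_energy \<rho> (scale_lattice m L) < lattice_energy \<rho> (scale_lattice l L)"
      using E_strict[of l m] Eeq[of l] Eeq[of m] by simp
  next
    fix l :: real assume "l > 0"
    then show "lattice_energy \<rho> (scale_lattice l L) > 0" using E_pos Eeq by simp
  next
    fix t :: real assume t: "t > 0"
    obtain l where l: "l > 0 \<and> E l = t" "\<And>m. m > 0 \<and> E m = t \<Longrightarrow> m = l"
      using E_root[OF t] by blast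
    show "\<exists>!l. l > 0 \<and> lattice_energy \<rho> (scale_lattice l L) = t"
    proof (rule ex1I[of _ l])
      show "l > 0 \<and> lattice_energy \<rho> (scale_lattice l L) = t" using l(1) Eeq by simp
      fix m assume "m > 0 \<and> lattice_energy \<rho> (scale_lattice m L) = t"
      then show "m = l" using l(2)[of m] Eeq[of m] by simp
    qed
  qed
qed

lemma F_strict_min:
  fixes F :: "real \<Rightarrow> real"
  assumes F_cont: "continuous_on {0<..} F"
    and r0_pos: "r0 > 0"
    and F_dec: "\<And>x y. 0 < x \<Longrightarrow> x < y \<Longrightarrow> y < r0 \<Longrightarrow> F y < F x"
    and F_inc: "\<And>x y. r0 < x \<Longrightarrow> x < y \<Longrightarrow> F x < F y"
    and r: "r > 0" "r \<noteq> r0"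
  shows "F r0 < F r"
proof -
  have "isCont F r0" using F_cont r0_pos continuous_on_eq_continuous_at[of "{0<..}" F] by auto
  then have lim: "(F \<longlongrightarrow> F r0) (at r0)" by (simp add: isCont_def)
  consider "r < r0" | "r > r0" using r by linarith
  then show ?thesis
  proof cases
    case 1
    define y where "y = (r + r0) / 2"
    have y: "r < y" "y < r0" using 1 by (auto simp: y_def)
    have Fy: "F y < F r" using F_dec[of r y] r y by simp
    have lim': "(F \<longlongrightarrow> F r0) (at_left r0)"
      by (rule tendsto_mono[OF _ lim]) (simp add: at_le)
    have ev: "eventually (\<lambda>t. F t \<le> F y) (at_left r0)"
      using eventually_at_left_real[OF y(2)]
    proof eventually_elim
      case (elim t)
      then show ?case using F_dec[of y t] y r by auto
    qed
    have "F r0 \<le> F y" by (rule tendsto_upperbound[OF lim' ev]) simp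
    then show ?thesis using Fy by linarith
  next
    case 2
    define y where "y = (r + r0) / 2"
    have y: "r0 < y" "y < r" using 2 by (auto simp: y_def)
    have Fy: "F y < F r" using F_inc[of y r] y by simp
    have lim': "(F \<longlongrightarrow> F r0) (at_right r0)"
      by (rule tendsto_mono[OF _ lim]) (simp add: at_le)
    have ev: "eventually (\<lambda>t. F t \<le> F y) (at_right r0)"
      using eventually_at_right_real[OF y(1)]
    proof eventually_elim
      case (elim t)
      then show ?case using F_inc[of t y] y by auto
    qed
    have "F r0 \<le> F y" by (rule tendsto_upperbound[OF lim' ev]) simp
    then show ?thesis using Fy by linarith
  qed
qed

theorem theorem3p1:
  fixes F \<rho> :: "real \<Rightarrow> real" and r0 :: real
  assumes F_cont: "continuous_on {0<..} F"
    and r0_pos: "r0 > 0"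
    and F_dec: "\<And>x y. 0 < x \<Longrightarrow> x < y \<Longrightarrow> y < r0 \<Longrightarrow> F y < F x"
    and F_inc: "\<And>x y. r0 < x \<Longrightarrow> x < y \<Longrightarrow> F x < F y"
    and rho_cont: "continuous_on {0<..} \<rho>"
    and rho_nonneg: "\<And>r. r > 0 \<Longrightarrow> \<rho> r \<ge> 0"
    and rho_dec: "\<And>x y. 0 < x \<Longrightarrow> x < y \<Longrightarrow> \<rho> y < \<rho> x"
    and rho_decay: "\<exists>\<eta>>0. \<rho> \<in> O[at_top](\<lambda>r. r powr (- real CARD('n) - \<eta>))"
  shows "(\<forall>L \<in> (unit_lattices :: (real^'n) set set).
            (\<exists>!s. s > 0 \<and> (\<forall>\<mu>>0. F (lattice_energy \<rho> (scale_lattice s L))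
                                      \<le> F (lattice_energy \<rho> (scale_lattice \<mu> L))))
          \<and> lambda_opt F \<rho> L > 0
          \<and> F (lattice_energy \<rho> (scale_lattice (lambda_opt F \<rho> L) L)) = F r0
          \<and> (\<forall>r>0. F r0 \<le> F r))
     \<and> (\<forall>Ld \<in> (unit_lattices :: (real^'n) set set).
          ((\<forall>L \<in> (unit_lattices :: (real^'n) set set).
              lattice_energy \<rho> (scale_lattice (lambda_opt F \<rho> Ld) Ld)
                \<le> lattice_energy \<rho> (scale_lattice (lambda_opt F \<rho> Ld) L))
           \<and> (\<forall>L \<in> (unit_lattices :: (real^'n) set set).
              lattice_energy \<rho> (scale_lattice (lambda_opt F \<rho> Ld) L)
                = lattice_energy \<rho> (scale_lattice (lambda_opt F \<rho> Ld) Ld)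
              \<longrightarrow> isometric_lattices L Ld))
          \<longrightarrow> (\<forall>L \<in> (unit_lattices :: (real^'n) set set). lambda_opt F \<rho> Ld \<le> lambda_opt F \<rho> L)
            \<and> (\<forall>L \<in> (unit_lattices :: (real^'n) set set). lambda_opt F \<rho> L = lambda_opt F \<rho> Ld \<longrightarrow> isometric_lattices L Ld))"
proof -
  have key: "\<And>L::(real^'n) set. L \<in> unit_lattices \<Longrightarrow>
       (\<forall>l m. 0 < l \<longrightarrow> l < m \<longrightarrow> lattice_energy \<rho> (scale_lattice m L) < lattice_energy \<rho> (scale_lattice l L))
       \<and> (\<forall>l>0. lattice_energy \<rho> (scale_lattice l L) > 0)
       \<and> (\<forall>t>0. \<exists>!l. l > 0 \<and> lattice_energy \<rho> (scale_lattice l L) = t)"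
    by (rule lattice_key[OF rho_cont rho_nonneg rho_dec rho_decay])
  have Fmin: "F r0 \<le> F r" if "r > 0" for r
    using F_strict_min[OF F_cont r0_pos F_dec F_inc that] by (cases "r = r0") auto
  have Feq: "r = r0" if "r > 0" "F r = F r0" for r
    using F_strict_min[OF F_cont r0_pos F_dec F_inc that(1)] that(2) by force
  have opt: "(\<exists>!s. s > 0 \<and> (\<forall>\<mu>>0. F (lattice_energy \<rho> (scale_lattice s L))
                                      \<le> F (lattice_energy \<rho> (scale_lattice \<mu> L))))
          \<and> lambda_opt F \<rho> L > 0
          \<and> lattice_energy \<rho> (scale_lattice (lambda_opt F \<rho> L) L) = r0"
    if L: "L \<in> (unit_lattices :: (real^'n) set set)" for L
  proof -
    note k = key[OF L]
    have strict: "\<And>l m. 0 < l \<Longrightarrow> l < m \<Longrightarrow> lattice_energy \<rho> (scale_lattice m L) < lattice_energy \<rho> (scale_lattice l L)"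
      using k by blast
    have pos: "\<And>l. l > 0 \<Longrightarrow> lattice_energy \<rho> (scale_lattice l L) > 0" using k by blast
    have "\<exists>!l. l > 0 \<and> lattice_energy \<rho> (scale_lattice l L) = r0" using k r0_pos by blast
    then obtain l where l: "l > 0" "lattice_energy \<rho> (scale_lattice l L) = r0"
      and lu: "\<And>m. m > 0 \<Longrightarrow> lattice_energy \<rho> (scale_lattice m L) = r0 \<Longrightarrow> m = l"
      by blast
    define P where "P = (\<lambda>s. s > 0 \<and> (\<forall>\<mu>>0. F (lattice_energy \<rho> (scale_lattice s L))
                                      \<le> F (lattice_energy \<rho> (scale_lattice \<mu> L))))"
    have Pl: "P l" unfolding P_def using l Fmin pos by simp
    have Pu: "s = l" if "P s" for s
    proof -
      have s: "s > 0" "\<And>\<mu>. \<mu> > 0 \<Longrightarrow> F (lattice_energy \<rho> (scale_lattice s L)) \<le> F (lattice_energy \<rho> (scale_lattice \<mu> L))"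
        using that unfolding P_def by auto
      have "F (lattice_energy \<rho> (scale_lattice s L)) \<le> F r0" using s(2)[OF l(1)] l(2) by simp
      moreover have "F r0 \<le> F (lattice_energy \<rho> (scale_lattice s L))" using Fmin pos[OF s(1)] by blast
      ultimately have "F (lattice_energy \<rho> (scale_lattice s L)) = F r0" by linarith
      then have "lattice_energy \<rho> (scale_lattice s L) = r0" using Feq pos[OF s(1)] by blast
      then show "s = l" using lu s(1) by blast
    qed
    have ex: "\<exists>!s. P s" using Pl Pu by blast
    have lo: "lambda_opt F \<rho> L = l"
      unfolding lambda_opt_def P_def[symmetric] using Pl Pu by (rule the_equality)
    show ?thesis using ex lo l unfolding P_def by simp
  qed
  show ?thesis
  proof (rule conjI)
    show "\<forall>L \<in> (unit_lattices :: (real^'n) set set).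
            (\<exists>!s. s > 0 \<and> (\<forall>\<mu>>0. F (lattice_energy \<rho> (scale_lattice s L))
                                      \<le> F (lattice_energy \<rho> (scale_lattice \<mu> L))))
          \<and> lambda_opt F \<rho> L > 0
          \<and> F (lattice_energy \<rho> (scale_lattice (lambda_opt F \<rho> L) L)) = F r0
          \<and> (\<forall>r>0. F r0 \<le> F r)"
  proof (intro ballI conjI)
    fix L :: "(real^'n) set" assume L: "L \<in> unit_lattices"
    show "\<exists>!s. s > 0 \<and> (\<forall>\<mu>>0. F (lattice_energy \<rho> (scale_lattice s L))
                                      \<le> F (lattice_energy \<rho> (scale_lattice \<mu> L)))"
      using opt[OF L] by blast
    show "lambda_opt F \<rho> L > 0" using opt[OF L] by blast
    show "F (lattice_energy \<rho> (scale_lattice (lambda_opt F \<rho> L) L)) = F r0" using opt[OF L] by simp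
    show "\<forall>r>0. F r0 \<le> F r" using Fmin by blast
  qed
  next
    show "\<forall>Ld \<in> (unit_lattices :: (real^'n) set set).
          ((\<forall>L \<in> (unit_lattices :: (real^'n) set set).
              lattice_energy \<rho> (scale_lattice (lambda_opt F \<rho> Ld) Ld)
                \<le> lattice_energy \<rho> (scale_lattice (lambda_opt F \<rho> Ld) L))
           \<and> (\<forall>L \<in> (unit_lattices :: (real^'n) set set).
              lattice_energy \<rho> (scale_lattice (lambda_opt F \<rho> Ld) L)
                = lattice_energy \<rho> (scale_lattice (lambda_opt F \<rho> Ld) Ld)
              \<longrightarrow> isometric_lattices L Ld))
          \<longrightarrow> (\<forall>L \<in> (unit_lattices :: (real^'n) set set). lambda_opt F \<rho> Ld \<le> lambda_opt F \<rho> L)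
            \<and> (\<forall>L \<in> (unit_lattices :: (real^'n) set set). lambda_opt F \<rho> L = lambda_opt F \<rho> Ld \<longrightarrow> isometric_lattices L Ld)"
  proof (intro ballI impI)
    fix Ld :: "(real^'n) set" assume Ld: "Ld \<in> unit_lattices"
    assume H: "(\<forall>L \<in> (unit_lattices :: (real^'n) set set).
              lattice_energy \<rho> (scale_lattice (lambda_opt F \<rho> Ld) Ld)
                \<le> lattice_energy \<rho> (scale_lattice (lambda_opt F \<rho> Ld) L))
           \<and> (\<forall>L \<in> (unit_lattices :: (real^'n) set set).
              lattice_energy \<rho> (scale_lattice (lambda_opt F \<rho> Ld) L)
                = lattice_energy \<rho> (scale_lattice (lambda_opt F \<rho> Ld) Ld)
              \<longrightarrow> isometric_lattices L Ld)"
    define ls where "ls = lambda_opt F \<rho> Ld"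
    have ls: "ls > 0" "lattice_energy \<rho> (scale_lattice ls Ld) = r0"
      using opt[OF Ld] unfolding ls_def by auto
    have main: "ls \<le> lambda_opt F \<rho> L \<and> (lambda_opt F \<rho> L = ls \<longrightarrow> isometric_lattices L Ld)"
      if L: "L \<in> unit_lattices" for L
    proof -
      define lL where "lL = lambda_opt F \<rho> L"
      have lL: "lL > 0" "lattice_energy \<rho> (scale_lattice lL L) = r0"
        using opt[OF L] unfolding lL_def by auto
      have h1: "r0 \<le> lattice_energy \<rho> (scale_lattice ls L)"
        using H L ls(2) unfolding ls_def by auto
      have le: "ls \<le> lL"
      proof (rule ccontr)
        assume "\<not> ls \<le> lL"
        then have "lattice_energy \<rho> (scale_lattice ls L) < lattice_energy \<rho> (scale_lattice lL L)"
          using key[OF L] lL(1) by auto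
        then show False using h1 lL(2) by linarith
      qed
      have iso: "isometric_lattices L Ld" if eq: "lL = ls"
      proof -
        have "lattice_energy \<rho> (scale_lattice ls L) = lattice_energy \<rho> (scale_lattice ls Ld)"
          using lL(2) ls(2) eq by simp
        then show ?thesis using H L unfolding ls_def by blast
      qed
      show ?thesis using le iso unfolding lL_def by blast
    qed
    show "(\<forall>L \<in> (unit_lattices :: (real^'n) set set). lambda_opt F \<rho> Ld \<le> lambda_opt F \<rho> L)
            \<and> (\<forall>L \<in> (unit_lattices :: (real^'n) set set). lambda_opt F \<rho> L = lambda_opt F \<rho> Ld \<longrightarrow> isometric_lattices L Ld)"
      using main unfolding ls_def by blast
  qed
  qed
qed

end
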